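(* Let $1\le k\le n$ and let $H_1,\dots,H_k\subset\mathbb{E}^n$ be closed halfspaces whose boundary hyperplanes are in general position (their normal vectors are linearly independent). Let $\bar H_i$ be the closure of $\mathbb{E}^n\setminus H_i$, and set $P=\bigcap_{i=1}^kH_i$, $\bar P=\bigcap_{i=1}^k\bar H_i$. Then for every point $\mathbf{p}_0\in\mathbb{E}^n$, $$W_{P,\mathbf{p}_0,n}'(0)+W_{\bar P,\mathbf{p}_0,n}'(0)=0,$$ where $W_{Q,\mathbf{p}_0,n}$ denotes the holomorphic extension to a neighborhood of $s=0$ of the function $s\mapsto s^nV_{Q,\mathbf{p}_0,n}(1/s)$, $s>0$ (such an extension exists for every convex polyhedral set $Q$).
   Context: For a convex polyhedral set $Q\subset\mathbb{E}^n$ (a nonempty intersection of finitely many closed halfspaces) and $\mathbf{p}_0\in\mathbb{E}^n$, $V_{Q,\mathbf{p}_0,n}(r)=\mathrm{Vol}_n[Q\cap B_n(\mathbf{p}_0,r)]$ for $r\ge0$ (and $0$ for $r<0$), where $B_n(\mathbf{p}_0,r)$ is the closed ball of radius $r$ centered at $\mathbf{p}_0$. *)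

theory Defs
  imports "HOL-Analysis.Analysis"
begin

definition ball_vol :: "('a::euclidean_space) set \<Rightarrow> 'a \<Rightarrow> real \<Rightarrow> real" where
  "ball_vol Q p0 r = (if r < 0 then 0 else measure lebesgue (Q \<inter> cball p0 r))"

definition is_W_ext :: "('a::euclidean_space) set \<Rightarrow> 'a \<Rightarrow> (complex \<Rightarrow> complex) \<Rightarrow> bool" where
  "is_W_ext Q p0 W \<longleftrightarrow> (\<exists>e>0. W holomorphic_on ball 0 e \<and>
      (\<forall>s::real. 0 < s \<and> s < e \<longrightarrow>
         W (complex_of_real s) = complex_of_real (s ^ DIM('a) * ball_vol Q p0 (1 / s))))"

end

theory Submission
  imports Defs
begin


lemma closed_bounded_lmeas: "closed S \<Longrightarrow> bounded S \<Longrightarrow> S \<in> lmeasurable"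
  by (simp add: compact_eq_bounded_closed lmeasurable_compact)

lemma closed_sets_leb: "closed (S::'a::euclidean_space set) \<Longrightarrow> S \<in> sets lebesgue"
  by (simp add: borel_closed)

lemma slab_ball_bound:
  fixes u :: "'a::euclidean_space"
  assumes u: "norm u = 1" and eta: "\<eta> > 0"
  shows "measure lebesgue ({x. \<bar>u \<bullet> x\<bar> \<le> \<eta>} \<inter> cball 0 1) \<le> 3*\<eta> * measure lebesgue (cball (0::'a) 2)"
proof -
  define S where "S = {x. \<bar>u \<bullet> x\<bar> \<le> \<eta>} \<inter> cball (0::'a) 1"
  define N where "N = nat \<lfloor>1/(3*\<eta>)\<rfloor>"
  define F where "F j = (+) ((3*real j*\<eta>) *\<^sub>R u) ` S" for j :: nat
  have N1: "real N = of_int \<lfloor>1/(3*\<eta>)\<rfloor>" unfolding N_def using eta by (subst of_nat_nat) auto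
  have N2: "real N \<le> 1/(3*\<eta>)" "1/(3*\<eta>) < real N + 1" unfolding N1 by (rule of_int_floor_le, rule real_of_int_floor_add_one_gt)
  have uu: "u \<bullet> u = 1" using u by (simp add: norm_eq_1)
  have cS: "closed S" unfolding S_def
    by (intro closed_Int closed_cball) (simp add: closed_Collect_le continuous_intros)
  have bS: "bounded S" unfolding S_def by auto
  have cpS: "compact S" using cS bS compact_eq_bounded_closed by blast
  have Fm: "F j \<in> lmeasurable" for j
    unfolding F_def by (intro lmeasurable_compact compact_continuous_image cpS) (intro continuous_intros)
  have Fmeas: "measure lebesgue (F j) = measure lebesgue S" for j
    unfolding F_def by (rule measure_translation)
  have Fmem: "\<bar>u \<bullet> x - 3*real j*\<eta>\<bar> \<le> \<eta> \<and> norm x \<le> 1 + 3*real j*\<eta>" if xF: "x \<in> F j" for x j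
  proof -
    obtain y where y: "y \<in> S" "x = (3*real j*\<eta>) *\<^sub>R u + y" using xF unfolding F_def by auto
    have "u \<bullet> x = 3*real j*\<eta> + u \<bullet> y" using y uu by (simp add: inner_add_right)
    moreover have "norm x \<le> norm ((3*real j*\<eta>) *\<^sub>R u) + norm y" using y norm_triangle_ineq by blast
    moreover have "norm ((3*real j*\<eta>) *\<^sub>R u) = 3*real j*\<eta>" using u eta by simp
    ultimately show ?thesis using y(1) unfolding S_def by auto
  qed
  have disj0: False if ij: "i \<noteq> j" "x \<in> F i" "x \<in> F j" for i j x
  proof -
    have a: "\<bar>u \<bullet> x - 3*real i*\<eta>\<bar> \<le> \<eta>" "\<bar>u \<bullet> x - 3*real j*\<eta>\<bar> \<le> \<eta>" using Fmem ij by auto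
    hence b: "\<bar>3*real i*\<eta> - 3*real j*\<eta>\<bar> \<le> 2*\<eta>" by linarith
    have "3*real i*\<eta> - 3*real j*\<eta> = (3*\<eta>) * (real i - real j)" by (simp add: algebra_simps)
    hence "\<bar>3*real i*\<eta> - 3*real j*\<eta>\<bar> = 3*\<bar>real i - real j\<bar>*\<eta>" using eta by (simp add: abs_mult)
    hence "3*\<bar>real i - real j\<bar>*\<eta> \<le> 2*\<eta>" using b by simp
    moreover have "\<bar>real i - real j\<bar> \<ge> 1" using ij by linarith
    moreover have "1 * \<eta> \<le> \<bar>real i - real j\<bar> * \<eta>" using eta \<open>\<bar>real i - real j\<bar> \<ge> 1\<close> by (intro mult_right_mono) auto
    ultimately show False using eta by linarith
  qed
  have disj: "pairwise (\<lambda>i j. disjnt (F i) (F j)) {..N}"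
    using disj0 by (auto simp: pairwise_def disjnt_def)
  have sub: "(\<Union>j\<in>{..N}. F j) \<subseteq> cball 0 2"
  proof clarsimp
    fix j x assume "j \<le> N" "x \<in> F j"
    hence "norm x \<le> 1 + 3*real j*\<eta>" using Fmem by blast
    moreover have "3*real j*\<eta> \<le> 1"
    proof -
      have "real N \<le> 1/(3*\<eta>)" using N2 by linarith
      hence "real j \<le> 1/(3*\<eta>)" using \<open>j \<le> N\<close> by linarith
      thus ?thesis using eta by (simp add: field_simps)
    qed
    ultimately show "norm x \<le> 2" by linarith
  qed
  have "measure lebesgue (\<Union>j\<in>{..N}. F j) = (\<Sum>j\<in>{..N}. measure lebesgue (F j))"
    by (rule measure_UNION') (use Fm disj in auto)
  also have "\<dots> = (real N + 1) * measure lebesgue S" by (simp add: Fmeas)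
  finally have "(real N + 1) * measure lebesgue S \<le> measure lebesgue (cball (0::'a) 2)"
    using sub measure_mono_fmeasurable[OF sub] Fm by (metis fmeasurableD lmeasurable_cball sets.finite_UN finite_atMost)
  moreover have "1/(3*\<eta>) \<le> real N + 1" using N2 by linarith
  moreover have "measure lebesgue S \<ge> 0" by simp
  ultimately have "1/(3*\<eta>) * measure lebesgue S \<le> measure lebesgue (cball (0::'a) 2)"
    by (smt (verit) mult_right_mono)
  thus ?thesis using eta unfolding S_def by (simp add: field_simps)
qed

definition slab :: "'a::euclidean_space \<Rightarrow> real \<Rightarrow> 'a set" where
  "slab u e = {x. \<bar>u \<bullet> x\<bar> \<le> e}"

lemma closed_slab: "closed (slab u e)"
  unfolding slab_def by (simp add: closed_Collect_le continuous_intros)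

lemma slab_cball_lmeas: "slab u e \<inter> cball c r \<in> lmeasurable"
  by (intro closed_bounded_lmeas closed_Int closed_slab closed_cball) auto

lemma slab_scale:
  fixes u :: "'a::euclidean_space"
  assumes R: "R > 0"
  shows "measure lebesgue (slab u e \<inter> cball 0 R) = R ^ DIM('a) * measure lebesgue (slab u (e/R) \<inter> cball 0 1)"
proof -
  have "(\<lambda>x. R *\<^sub>R x + 0) ` (slab u (e/R) \<inter> cball 0 1) = slab u e \<inter> cball 0 R"
  proof (intro equalityI subsetI)
    fix y assume "y \<in> (\<lambda>x. R *\<^sub>R x + 0) ` (slab u (e/R) \<inter> cball 0 1)"
    then obtain x where x: "x \<in> slab u (e/R) \<inter> cball 0 1" "y = R *\<^sub>R x" by auto
    have "\<bar>u \<bullet> y\<bar> = R * \<bar>u \<bullet> x\<bar>" using R x(2) by (simp add: abs_mult)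
    also have "\<dots> \<le> R * (e/R)" using x(1) R by (intro mult_left_mono) (auto simp: slab_def)
    finally have 1: "\<bar>u \<bullet> y\<bar> \<le> e" using R by simp
    have "norm y = R * norm x" using R x(2) by simp
    also have "\<dots> \<le> R" using x(1) R by (simp add: mult_le_cancel_left1)
    finally show "y \<in> slab u e \<inter> cball 0 R" using 1 by (simp add: slab_def)
  next
    fix y assume y: "y \<in> slab u e \<inter> cball 0 R"
    have "\<bar>u \<bullet> ((1/R) *\<^sub>R y)\<bar> = \<bar>u \<bullet> y\<bar> / R" using R by (simp add: abs_mult)
    also have "\<dots> \<le> e / R" using y R by (intro divide_right_mono) (auto simp: slab_def)
    finally have 1: "(1/R) *\<^sub>R y \<in> slab u (e/R)" by (simp add: slab_def)
    have "norm ((1/R) *\<^sub>R y) = norm y / R" using R by simp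
    also have "\<dots> \<le> 1" using y R by simp
    finally have "(1/R) *\<^sub>R y \<in> slab u (e/R) \<inter> cball 0 1" using 1 by simp
    moreover have "y = R *\<^sub>R ((1/R) *\<^sub>R y) + 0" using R by simp
    ultimately show "y \<in> (\<lambda>x. R *\<^sub>R x + 0) ` (slab u (e/R) \<inter> cball 0 1)" by blast
  qed
  hence "measure lebesgue (slab u e \<inter> cball 0 R) = measure lebesgue ((\<lambda>x. R *\<^sub>R x + 0) ` (slab u (e/R) \<inter> cball 0 1))"
    by simp
  also have "\<dots> = \<bar>R\<bar> ^ DIM('a) * measure lebesgue (slab u (e/R) \<inter> cball 0 1)"
    by (rule measure_lebesgue_affine)
  finally show ?thesis using R by simp
qed

lemma slab_mono: "e1 \<le> e2 \<Longrightarrow> measure lebesgue (slab u e1 \<inter> cball c r) \<le> measure lebesgue (slab u e2 \<inter> cball c r)"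
  by (rule measure_mono_fmeasurable) (auto simp: slab_def fmeasurableD[OF slab_cball_lmeas] slab_cball_lmeas[unfolded slab_def])

lemma pow_diff_bound:
  fixes d :: real
  assumes "0 \<le> d" "d \<le> 1/2"
  shows "(1+d)^n - (1-d)^n \<le> 2*d * (real n * 2^n)"
proof -
  have "(1+d)^n - (1-d)^n = ((1+d) - (1-d)) * (\<Sum>i<n. (1-d) ^ (n - Suc i) * (1+d) ^ i)"
    by (rule power_diff_sumr2)
  also have "\<dots> = 2*d * (\<Sum>i<n. (1-d) ^ (n - Suc i) * (1+d) ^ i)" by simp
  also have "(\<Sum>i<n. (1-d) ^ (n - Suc i) * (1+d) ^ i) \<le> (\<Sum>i<n. 2^n)"
  proof (rule sum_mono)
    fix i assume "i \<in> {..<n}"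
    have "(1-d) ^ (n - Suc i) \<le> 1" using assms by (intro power_le_one) auto
    moreover have "(1+d) ^ i \<le> 2 ^ i" using assms by (intro power_mono) auto
    moreover have "(2::real) ^ i \<le> 2 ^ n" using \<open>i \<in> {..<n}\<close> by (intro power_increasing) auto
    moreover have "0 \<le> (1-d) ^ (n - Suc i)" "0 \<le> (1+d)^i" using assms by auto
    ultimately show "(1-d) ^ (n - Suc i) * (1+d) ^ i \<le> 2^n" by (smt (verit) mult_mono mult_cancel_right1)
  qed
  hence "2*d * (\<Sum>i<n. (1-d) ^ (n - Suc i) * (1+d) ^ i) \<le> 2*d * (real n * 2^n)"
    using assms by (intro mult_left_mono) auto
  finally show ?thesis .
qed

definition shell :: "real \<Rightarrow> 'a::euclidean_space set" where
  "shell d = {x. 1 - d < norm x \<and> norm x \<le> 1 + d}"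

lemma shell_eq: "shell d = cball 0 (1+d) - cball 0 (1-d)"
  by (auto simp: shell_def)

lemma shell_sets: "shell d \<in> sets lebesgue"
  unfolding shell_eq by (intro sets.Diff) (auto simp: borel_open borel_closed)

lemma slab_shell_bound:
  fixes u :: "'a::euclidean_space"
  assumes u: "norm u = 1" and e: "e > 0" and d: "0 \<le> d" "d \<le> 1/2"
  shows "measure lebesgue (slab u e \<inter> shell d) \<le>
     (12 * real DIM('a) * 2^DIM('a) * measure lebesgue (cball (0::'a) 2)) * e * d"
proof -
  define n where "n = DIM('a)"
  define M where "M = measure lebesgue (cball (0::'a) 2)"
  define A where "A = slab u e \<inter> cball (0::'a) (1+d)"
  define B where "B = slab u e \<inter> cball (0::'a) (1-d)"
  define G where "G = measure lebesgue (slab u (e/(1-d)) \<inter> cball (0::'a) 1)"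
  have G0: "G \<ge> 0" unfolding G_def by simp
  have GM: "G \<le> 3*(e/(1-d)) * M" unfolding G_def M_def
    using slab_ball_bound[OF u, of "e/(1-d)"] e d by (simp add: slab_def)
  have "slab u e \<inter> shell d \<subseteq> A - B" by (auto simp: A_def B_def shell_def)
  hence "measure lebesgue (slab u e \<inter> shell d) \<le> measure lebesgue (A - B)"
    by (intro measure_mono_fmeasurable) (auto simp: A_def B_def intro!: sets.Int shell_sets closed_sets_leb[OF closed_slab] fmeasurableD[OF slab_cball_lmeas] intro: fmeasurable_Diff slab_cball_lmeas)
  also have "\<dots> = measure lebesgue A - measure lebesgue B"
    by (rule measure_Diff) (use d in \<open>auto simp: A_def B_def fmeasurableD[OF slab_cball_lmeas] emeasure_eq_measure2[OF slab_cball_lmeas]\<close>)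
  also have "measure lebesgue A = (1+d)^n * measure lebesgue (slab u (e/(1+d)) \<inter> cball 0 1)"
    unfolding A_def n_def using d by (intro slab_scale) auto
  also have "\<dots> \<le> (1+d)^n * G"
    unfolding G_def using d e by (intro mult_left_mono slab_mono) (auto simp: field_simps)
  also have "measure lebesgue B = (1-d)^n * G"
    unfolding B_def n_def G_def using d by (intro slab_scale) auto
  finally have "measure lebesgue (slab u e \<inter> shell d) \<le> ((1+d)^n - (1-d)^n) * G"
    by (simp add: algebra_simps)
  also have "\<dots> \<le> (2*d * (real n * 2^n)) * (3*(e/(1-d)) * M)"
    using pow_diff_bound[OF d] G0 GM d by (intro mult_mono) auto
  also have "\<dots> \<le> (2*d * (real n * 2^n)) * (3*(2*e) * M)"
  proof -
    have "e/(1-d) \<le> 2*e" using d e by (simp add: field_simps)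
    thus ?thesis using d e by (intro mult_left_mono mult_right_mono) (auto simp: M_def)
  qed
  finally show ?thesis by (simp add: n_def M_def algebra_simps)
qed

lemma Int_cball_lmeas: "S \<in> sets lebesgue \<Longrightarrow> S \<inter> cball c r \<in> lmeasurable"
  by (metis fmeasurable_Int_fmeasurable lmeasurable_cball Int_commute)

lemma translate_eq: "(+) (v::'a::ab_group_add) ` S = {x. x - v \<in> S}"
proof (intro equalityI subsetI)
  fix x assume "x \<in> {x. x - v \<in> S}" thus "x \<in> (+) v ` S" by (intro image_eqI[of _ _ "x - v"]) auto
qed auto

lemma split_meas:
  assumes "S \<in> sets lebesgue" "T \<in> sets lebesgue"
  shows "measure lebesgue (S \<inter> cball c r) = measure lebesgue (S \<inter> T \<inter> cball c r) + measure lebesgue ((S - T) \<inter> cball c r)"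
proof -
  have "measure lebesgue ((S \<inter> cball c r) - (S \<inter> T \<inter> cball c r)) = measure lebesgue (S \<inter> cball c r) - measure lebesgue (S \<inter> T \<inter> cball c r)"
    using assms by (intro measure_Diff) (auto simp: emeasure_eq_measure2 Int_cball_lmeas fmeasurableD[OF Int_cball_lmeas] simp del: Int_iff)
  moreover have "(S \<inter> cball c r) - (S \<inter> T \<inter> cball c r) = (S - T) \<inter> cball c r" by auto
  ultimately show ?thesis by simp
qed

lemma diff_bound:
  assumes E: "E \<in> sets lebesgue" and DS: "DS \<in> lmeasurable"
    and s1: "E \<inter> (cball c1 r1 - cball c0 r0) \<subseteq> DS" and s2: "E \<inter> (cball c0 r0 - cball c1 r1) \<subseteq> DS"
  shows "\<bar>measure lebesgue (E \<inter> cball c1 r1) - measure lebesgue (E \<inter> cball c0 r0)\<bar> \<le> measure lebesgue DS"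
proof -
  have g: "measure lebesgue (E \<inter> cball c1 r1) \<le> measure lebesgue (E \<inter> cball c0 r0) + measure lebesgue DS"
    if s: "E \<inter> (cball c1 r1 - cball c0 r0) \<subseteq> DS" for c0 r0 c1 r1
  proof -
    have "E \<inter> cball c1 r1 \<subseteq> (E \<inter> cball c0 r0) \<union> DS" using s by auto
    hence "measure lebesgue (E \<inter> cball c1 r1) \<le> measure lebesgue ((E \<inter> cball c0 r0) \<union> DS)"
      using E DS by (intro measure_mono_fmeasurable sets.Int fmeasurable.Un) (simp_all add: Int_cball_lmeas fmeasurableD[OF Int_cball_lmeas])
    also have "\<dots> \<le> measure lebesgue (E \<inter> cball c0 r0) + measure lebesgue DS"
      using E DS by (intro measure_Un_le) (simp_all add: fmeasurableD[OF Int_cball_lmeas] fmeasurableD)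
    finally show ?thesis .
  qed
  show ?thesis using g[OF s1] g[OF s2] by linarith
qed

lemma cone_estimate:
  fixes a :: "nat \<Rightarrow> 'a::euclidean_space" and v :: 'a
  assumes nz: "\<forall>i<k. a i \<noteq> 0" and v: "norm v \<le> 1/2"
  shows "\<bar>measure lebesgue ({x. \<forall>i<k. a i \<bullet> x \<le> 0} \<inter> cball v 1)
          + measure lebesgue ({x. \<forall>i<k. a i \<bullet> x \<le> 0} \<inter> cball (-v) 1)
          - 2 * measure lebesgue ({x. \<forall>i<k. a i \<bullet> x \<le> 0} \<inter> cball 0 1)\<bar>
     \<le> 2 * (real k * (12 * real DIM('a) * 2^DIM('a) * measure lebesgue (cball (0::'a) 2))) * norm v ^ 2"
proof (cases "v = 0")
  case True
  show ?thesis unfolding True minus_zero norm_zero by (simp only: zero_power2 mult_zero_right)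
next
  case False
  define K0 where "K0 = 12 * real DIM('a) * 2^DIM('a) * measure lebesgue (cball (0::'a) 2)"
  define C where "C = {x. \<forall>i<k. a i \<bullet> x \<le> 0}"
  define C' where "C' = {x. \<forall>i<k. a i \<bullet> (x - v) \<le> 0}"
  define e where "e = norm v"
  have e: "e > 0" "e \<le> 1/2" using False v by (auto simp: e_def)
  define u where "u i = (1 / norm (a i)) *\<^sub>R a i" for i
  have un: "norm (u i) = 1" if "i < k" for i using nz that by (simp add: u_def)
  define D where "D = (\<Union>i\<in>{..<k}. slab (u i) e)"
  define DS where "DS = D \<inter> shell e"
  have cC: "closed C"
  proof -
    have "C = (\<Inter>i\<in>{..<k}. {x. a i \<bullet> x \<le> 0})" by (auto simp: C_def)
    thus ?thesis by (simp add: closed_INT closed_halfspace_le)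
  qed
  have cC': "closed C'"
  proof -
    have "C' = (\<Inter>i\<in>{..<k}. {x. a i \<bullet> (x - v) \<le> 0})" by (auto simp: C'_def)
    thus ?thesis by (simp add: closed_INT closed_Collect_le continuous_intros)
  qed
  have sC: "C \<in> sets lebesgue" "C' \<in> sets lebesgue" using cC cC' closed_sets_leb by auto
  have tr: "(+) v ` (C \<inter> cball w 1) = C' \<inter> cball (v + w) 1" for w
    unfolding translate_eq by (auto simp: C_def C'_def dist_norm algebra_simps)
  have m1: "measure lebesgue (C \<inter> cball (-v) 1) = measure lebesgue (C' \<inter> cball 0 1)"
    using measure_translation[of v "C \<inter> cball (-v) 1"] tr[of "-v"] by simp
  have m0: "measure lebesgue (C \<inter> cball 0 1) = measure lebesgue (C' \<inter> cball v 1)"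
    using measure_translation[of v "C \<inter> cball 0 1"] tr[of 0] by simp
  have inD: "x \<in> D" if xin: "x \<in> (C - C') \<union> (C' - C)" for x
  proof -
    obtain i where i: "i < k" "(a i \<bullet> x \<le> 0 \<and> a i \<bullet> (x - v) > 0) \<or> (a i \<bullet> x > 0 \<and> a i \<bullet> (x - v) \<le> 0)"
      using xin by (auto simp: C_def C'_def not_le)
    have "\<bar>a i \<bullet> x\<bar> \<le> \<bar>a i \<bullet> v\<bar>" using i(2) by (auto simp: inner_diff_right)
    also have "\<dots> \<le> norm (a i) * norm v" by (rule Cauchy_Schwarz_ineq2)
    finally have "\<bar>a i \<bullet> x\<bar> / norm (a i) \<le> e" using nz i(1) by (simp add: e_def field_simps)
    hence "x \<in> slab (u i) e" by (simp add: slab_def u_def abs_mult)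
    thus ?thesis using i(1) by (auto simp: D_def)
  qed
  have sh1: "cball v 1 - cball 0 1 \<subseteq> shell e"
  proof
    fix x assume x: "x \<in> cball v 1 - cball 0 1"
    have "norm x \<le> norm v + norm (x - v)" by (metis norm_triangle_sub add.commute)
    moreover have "norm (x - v) \<le> 1" "\<not> norm x \<le> 1" using x by (simp_all add: dist_norm norm_minus_commute)
    ultimately show "x \<in> shell e" using e unfolding shell_def e_def by simp
  qed
  have sh2: "cball 0 1 - cball v 1 \<subseteq> shell e"
  proof
    fix x assume x: "x \<in> cball 0 1 - cball v 1"
    have "norm (x - v) \<le> norm x + norm v" by (rule norm_triangle_ineq4)
    moreover have "\<not> norm (x - v) \<le> 1" "norm x \<le> 1" using x by (simp_all add: dist_norm norm_minus_commute)
    ultimately show "x \<in> shell e" using e unfolding shell_def e_def by simp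
  qed
  have sD: "D \<in> sets lebesgue" unfolding D_def
    by (intro sets.finite_UN) (auto intro: closed_sets_leb closed_slab)
  have DSm: "DS \<in> lmeasurable"
  proof (rule bounded_set_imp_lmeasurable)
    show "bounded DS" unfolding DS_def shell_def by (rule bounded_subset[of "cball 0 (1+e)"]) (auto simp: dist_norm)
    show "DS \<in> sets lebesgue" unfolding DS_def using sD shell_sets by auto
  qed
  have DSb: "measure lebesgue DS \<le> real k * K0 * e^2"
  proof -
    have "DS = (\<Union>i\<in>{..<k}. slab (u i) e \<inter> shell e)" by (auto simp: DS_def D_def)
    hence "measure lebesgue DS \<le> (\<Sum>i\<in>{..<k}. measure lebesgue (slab (u i) e \<inter> shell e))"
      by (simp only:) (intro measure_UNION_le; auto intro!: sets.Int shell_sets closed_sets_leb[OF closed_slab])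
    also have "\<dots> \<le> (\<Sum>i\<in>{..<k}. K0 * e * e)"
      by (intro sum_mono) (unfold K0_def, rule slab_shell_bound, use un e in auto)
    finally show ?thesis by (simp add: power2_eq_square algebra_simps)
  qed
  have bnd: "\<bar>measure lebesgue (E \<inter> cball v 1) - measure lebesgue (E \<inter> cball 0 1)\<bar> \<le> measure lebesgue DS"
    if "E \<subseteq> (C - C') \<union> (C' - C)" "E \<in> sets lebesgue" for E
    by (rule diff_bound[OF that(2) DSm]) (use that inD sh1 sh2 in \<open>auto simp: DS_def\<close>)
  have b1: "\<bar>measure lebesgue ((C - C') \<inter> cball v 1) - measure lebesgue ((C - C') \<inter> cball 0 1)\<bar> \<le> measure lebesgue DS"
    using sC by (intro bnd) auto
  have b2: "\<bar>measure lebesgue ((C' - C) \<inter> cball v 1) - measure lebesgue ((C' - C) \<inter> cball 0 1)\<bar> \<le> measure lebesgue DS"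
    using sC by (intro bnd) auto
  have CC: "C' \<inter> C = C \<inter> C'" by auto
  note s1 = split_meas[OF sC(1) sC(2)] and s2 = split_meas[OF sC(2) sC(1), unfolded CC]
  have "\<bar>measure lebesgue (C \<inter> cball v 1) + measure lebesgue (C \<inter> cball (-v) 1) - 2 * measure lebesgue (C \<inter> cball 0 1)\<bar>
      \<le> 2 * measure lebesgue DS"
    unfolding m1 using m0 s1[of v 1] s1[of 0 1] s2[of v 1] s2[of 0 1] b1 b2 by linarith
  also have "\<dots> \<le> 2 * (real k * K0 * e^2)" using DSb by simp
  finally have X: "\<bar>measure lebesgue (C \<inter> cball v 1) + measure lebesgue (C \<inter> cball (-v) 1) - 2 * measure lebesgue (C \<inter> cball 0 1)\<bar>
      \<le> 2 * (real k * K0 * e^2)" .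
  show ?thesis unfolding C_def[symmetric] K0_def[symmetric] e_def[symmetric] using X by (simp only: mult.assoc)
qed



lemma deriv_zero_of_sq_bound:
  fixes F :: "complex \<Rightarrow> complex"
  assumes dF: "F field_differentiable at 0" and e: "e > 0"
    and bnd: "\<And>s. 0 < s \<Longrightarrow> s < e \<Longrightarrow> norm (F (complex_of_real s) - c) \<le> K * s^2"
  shows "deriv F 0 = 0"
proof -
  have ev: "eventually (\<lambda>s. 0 < s \<and> s < e) (at_right (0::real))"
    using e by (intro eventually_at_rightI[of 0 e]) auto
  have cont: "isCont F 0" using dF by (rule field_differentiable_imp_continuous_at)
  have ofr: "((\<lambda>s::real. complex_of_real s) \<longlongrightarrow> 0) (at_right 0)"
    by (intro tendsto_eq_intros) auto
  have L1: "((\<lambda>s. F (complex_of_real s)) \<longlongrightarrow> F 0) (at_right 0)"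
    using isCont_tendsto_compose[OF cont ofr] by simp
  have K0: "((\<lambda>s::real. K * s^2) \<longlongrightarrow> 0) (at_right 0)"
    by (intro tendsto_eq_intros) auto
  have L2: "((\<lambda>s. F (complex_of_real s) - c) \<longlongrightarrow> 0) (at_right 0)"
    by (rule Lim_null_comparison[OF _ K0]) (use ev bnd in \<open>auto elim!: eventually_mono\<close>)
  have "((\<lambda>s. (F (complex_of_real s) - c) + c) \<longlongrightarrow> 0 + c) (at_right 0)"
    by (intro tendsto_add L2 tendsto_const)
  hence "((\<lambda>s. F (complex_of_real s)) \<longlongrightarrow> c) (at_right 0)" by simp
  hence F0: "F 0 = c" using L1 tendsto_unique[OF trivial_limit_at_right_real] by blast
  have "(F has_field_derivative deriv F 0) (at 0)" using dF DERIV_deriv_iff_field_differentiable by blast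
  hence D: "((\<lambda>y. (F y - F 0) / (y - 0)) \<longlongrightarrow> deriv F 0) (at 0)" using has_field_derivative_iff by blast
  have fl: "filterlim (\<lambda>s::real. complex_of_real s) (at 0) (at_right 0)"
    unfolding filterlim_at using ofr by (auto simp: eventually_at_right_less eventually_mono[OF eventually_at_right_less])
  have D2: "((\<lambda>s. (F (complex_of_real s) - F 0) / (complex_of_real s - 0)) \<longlongrightarrow> deriv F 0) (at_right 0)"
    using filterlim_compose[OF D fl] by simp
  have K1: "((\<lambda>s::real. K * s) \<longlongrightarrow> 0) (at_right 0)"
    by (intro tendsto_eq_intros) auto
  have "eventually (\<lambda>s. norm ((F (complex_of_real s) - F 0) / (complex_of_real s - 0)) \<le> K * s) (at_right 0)"
    using ev
  proof (rule eventually_mono)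
    fix s :: real assume s: "0 < s \<and> s < e"
    have "norm ((F (complex_of_real s) - F 0) / (complex_of_real s - 0)) = norm (F (complex_of_real s) - c) / s"
      using s F0 by (simp add: norm_divide)
    also have "\<dots> \<le> K * s^2 / s" using bnd s by (intro divide_right_mono) auto
    also have "\<dots> = K * s" using s by (simp add: power2_eq_square)
    finally show "norm ((F (complex_of_real s) - F 0) / (complex_of_real s - 0)) \<le> K * s" .
  qed
  hence "((\<lambda>s. (F (complex_of_real s) - F 0) / (complex_of_real s - 0)) \<longlongrightarrow> 0) (at_right 0)"
    by (rule Lim_null_comparison[OF _ K1])
  thus ?thesis using D2 tendsto_unique[OF trivial_limit_at_right_real] by blast
qed



lemma exists_apex:
  fixes a :: "nat \<Rightarrow> 'a::euclidean_space"
  assumes inj: "inj_on a {..<k}" and ind: "independent (a ` {..<k})"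
  shows "\<exists>q. \<forall>i<k. a i \<bullet> q = b i"
proof -
  obtain g :: "'a \<Rightarrow> real" where g: "linear g" "\<forall>x\<in>a ` {..<k}. g x = b (inv_into {..<k} a x)"
    using real_vector.linear_independent_extend[OF ind, of "\<lambda>x. b (inv_into {..<k} a x)"] by blast
  define q where "q = (\<Sum>j\<in>Basis. g j *\<^sub>R j)"
  have gq: "g x = x \<bullet> q" for x
  proof -
    have "g x \<bullet> 1 = (\<Sum>i\<in>Basis. x \<bullet> i * (g i \<bullet> 1))" by (rule Linear_Algebra.linear_componentwise[OF g(1)])
    thus ?thesis by (simp add: q_def inner_sum_right mult.commute)
  qed
  have "a i \<bullet> q = b i" if "i < k" for i
  proof -
    have "a i \<in> a ` {..<k}" using that by simp
    hence "g (a i) = b (inv_into {..<k} a (a i))" using g(2) by blast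
    also have "inv_into {..<k} a (a i) = i" using inv_into_f_f[OF inj, of i] that by simp
    finally show ?thesis using gq[of "a i"] by simp
  qed
  thus ?thesis by blast
qed

lemma scale_meas:
  fixes P C :: "'a::euclidean_space set"
  assumes s: "s > 0" "\<bar>m\<bar> = s"
    and PC: "\<And>x. x \<in> P \<longleftrightarrow> m *\<^sub>R x + t \<in> C"
    and c: "c = m *\<^sub>R p0 + t"
  shows "s ^ DIM('a) * measure lebesgue (P \<inter> cball p0 (1/s)) = measure lebesgue (C \<inter> cball c 1)"
proof -
  have m0: "m \<noteq> 0" using s by auto
  have dd: "dist c (m *\<^sub>R x + t) = s * dist p0 x" for x
  proof -
    have "c - (m *\<^sub>R x + t) = m *\<^sub>R (p0 - x)" by (simp add: c algebra_simps)
    thus ?thesis using s by (simp add: dist_norm)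
  qed
  have "(\<lambda>x. m *\<^sub>R x + t) ` (P \<inter> cball p0 (1/s)) = C \<inter> cball c 1"
  proof (intro equalityI subsetI)
    fix y assume "y \<in> (\<lambda>x. m *\<^sub>R x + t) ` (P \<inter> cball p0 (1/s))"
    then obtain x where x: "x \<in> P" "dist p0 x \<le> 1/s" "y = m *\<^sub>R x + t" by auto
    have "s * dist p0 x \<le> s * (1/s)" using x(2) s by (intro mult_left_mono) auto
    thus "y \<in> C \<inter> cball c 1" using x PC dd[of x] s by auto
  next
    fix y assume y: "y \<in> C \<inter> cball c 1"
    define x where "x = (1/m) *\<^sub>R (y - t)"
    have yx: "y = m *\<^sub>R x + t" using m0 by (simp add: x_def)
    have "s * dist p0 x \<le> 1" using y dd[of x] yx by simp
    hence "dist p0 x \<le> 1/s" using s by (simp add: field_simps)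
    moreover have "x \<in> P" using PC y yx by auto
    ultimately show "y \<in> (\<lambda>x. m *\<^sub>R x + t) ` (P \<inter> cball p0 (1/s))" using yx by auto
  qed
  hence "measure lebesgue (C \<inter> cball c 1) = measure lebesgue ((\<lambda>x. m *\<^sub>R x + t) ` (P \<inter> cball p0 (1/s)))" by simp
  also have "\<dots> = \<bar>m\<bar> ^ DIM('a) * measure lebesgue (P \<inter> cball p0 (1/s))" by (rule measure_lebesgue_affine)
  finally show ?thesis using s by simp
qed

theorem mainTheorem10:
  fixes a :: "nat \<Rightarrow> 'a::euclidean_space" and b :: "nat \<Rightarrow> real" and k :: nat
    and p0 :: 'a and W1 W2 :: "complex \<Rightarrow> complex"
  defines "H \<equiv> \<lambda>i. {x. a i \<bullet> x \<le> b i}"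
  assumes "1 \<le> k" and "k \<le> DIM('a)"
    and "inj_on a {..<k}" and "independent (a ` {..<k})"
    and "is_W_ext (\<Inter>i\<in>{..<k}. H i) p0 W1"
    and "is_W_ext (\<Inter>i\<in>{..<k}. closure (UNIV - H i)) p0 W2"
  shows "deriv W1 0 + deriv W2 0 = 0"
proof -
  have nz: "\<forall>i<k. a i \<noteq> 0"
  proof (intro allI impI notI)
    fix i assume i: "i < k" "a i = 0"
    have "a i \<in> a ` {..<k}" using i(1) by simp
    hence "0 \<in> a ` {..<k}" using i(2) by simp
    hence "dependent (a ` {..<k})" by (rule real_vector.dependent_zero)
    thus False using assms(5) by simp
  qed
  obtain q where q: "\<forall>i<k. a i \<bullet> q = b i" using exists_apex[OF assms(4,5), of b] by (elim exE) auto
  define C where "C = {x::'a. \<forall>i<k. a i \<bullet> x \<le> 0}"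
  define m where "m v = measure lebesgue (C \<inter> cball v 1)" for v
  define d where "d = p0 - q"
  define P where "P = {x. \<forall>i<k. a i \<bullet> x \<le> b i}"
  define P' where "P' = {x. \<forall>i<k. b i \<le> a i \<bullet> x}"
  have P1: "(\<Inter>i\<in>{..<k}. H i) = P" by (auto simp: H_def P_def)
  have P2: "(\<Inter>i\<in>{..<k}. closure (UNIV - H i)) = P'"
  proof -
    have "closure (UNIV - H i) = {x. b i \<le> a i \<bullet> x}" if "i < k" for i
    proof -
      have "UNIV - H i = {x. a i \<bullet> x > b i}" by (auto simp: H_def)
      thus ?thesis using closure_halfspace_gt[of "a i" "b i"] nz that by simp
    qed
    thus ?thesis by (auto simp: P'_def)
  qed
  have V1: "s ^ DIM('a) * ball_vol P p0 (1/s) = m (s *\<^sub>R d)" if s: "s > 0" for s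
  proof -
    have eq: "a i \<bullet> (s *\<^sub>R x + - (s *\<^sub>R q)) = s * (a i \<bullet> x - b i)" if "i < k" for i x
      using q that by (simp add: inner_add_right algebra_simps)
    have "x \<in> P \<longleftrightarrow> s *\<^sub>R x + - (s *\<^sub>R q) \<in> C" for x
    proof -
      have "(a i \<bullet> x \<le> b i) \<longleftrightarrow> s * (a i \<bullet> x - b i) \<le> 0" for i
        using s by (simp add: mult_le_0_iff)
      thus ?thesis using eq by (auto simp: P_def C_def)
    qed
    hence "s ^ DIM('a) * measure lebesgue (P \<inter> cball p0 (1/s)) = measure lebesgue (C \<inter> cball (s *\<^sub>R d) 1)"
      by (intro scale_meas[where m=s and t="- (s *\<^sub>R q)"]) (use s in \<open>auto simp: d_def algebra_simps\<close>)
    thus ?thesis using s by (simp add: ball_vol_def m_def)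
  qed
  have V2: "s ^ DIM('a) * ball_vol P' p0 (1/s) = m (- (s *\<^sub>R d))" if s: "s > 0" for s
  proof -
    have eq: "a i \<bullet> ((-s) *\<^sub>R x + s *\<^sub>R q) = s * (b i - a i \<bullet> x)" if "i < k" for i x
      using q that by (simp add: inner_add_right algebra_simps)
    have "x \<in> P' \<longleftrightarrow> (-s) *\<^sub>R x + s *\<^sub>R q \<in> C" for x
    proof -
      have "(b i \<le> a i \<bullet> x) \<longleftrightarrow> s * (b i - a i \<bullet> x) \<le> 0" for i
        using s by (simp add: mult_le_0_iff)
      thus ?thesis using eq by (auto simp: P'_def C_def)
    qed
    hence "s ^ DIM('a) * measure lebesgue (P' \<inter> cball p0 (1/s)) = measure lebesgue (C \<inter> cball (- (s *\<^sub>R d)) 1)"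
      by (intro scale_meas[where m="-s" and t="s *\<^sub>R q"]) (use s in \<open>auto simp: d_def algebra_simps\<close>)
    thus ?thesis using s by (simp add: ball_vol_def m_def)
  qed
  obtain e1 where e1: "e1 > 0" "W1 holomorphic_on ball 0 e1"
    "\<And>s. 0 < s \<Longrightarrow> s < e1 \<Longrightarrow> W1 (complex_of_real s) = complex_of_real (s ^ DIM('a) * ball_vol P p0 (1 / s))"
    using assms(6) unfolding is_W_ext_def P1 by blast
  obtain e2 where e2: "e2 > 0" "W2 holomorphic_on ball 0 e2"
    "\<And>s. 0 < s \<Longrightarrow> s < e2 \<Longrightarrow> W2 (complex_of_real s) = complex_of_real (s ^ DIM('a) * ball_vol P' p0 (1 / s))"
    using assms(7) unfolding is_W_ext_def P2 by blast
  have d1: "W1 field_differentiable at 0" using e1 by (intro holomorphic_on_imp_differentiable_at[of _ "ball 0 e1"]) auto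
  have d2: "W2 field_differentiable at 0" using e2 by (intro holomorphic_on_imp_differentiable_at[of _ "ball 0 e2"]) auto
  define F where "F z = W1 z + W2 z" for z
  have dF: "F field_differentiable at 0" unfolding F_def using d1 d2 by (rule field_differentiable_add)
  define K0 where "K0 = 12 * real DIM('a) * 2^DIM('a) * measure lebesgue (cball (0::'a) 2)"
  define K where "K = 2 * (real k * K0) * norm d ^ 2"
  define e where "e = min (min e1 e2) (1 / (2 * (norm d + 1)))"
  have nd: "0 < 2 * norm d + 2" by (smt (verit) norm_ge_zero)
  have e: "e > 0" using e1 e2 nd by (simp add: e_def)
  have "deriv F 0 = 0"
  proof (rule deriv_zero_of_sq_bound[OF dF e])
    fix s :: real assume s: "0 < s" "s < e"
    have s1: "s < e1" "s < e2" "s < 1 / (2 * (norm d + 1))" using s by (auto simp: e_def)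
    have w1: "W1 (complex_of_real s) = complex_of_real (m (s *\<^sub>R d))"
      using e1(3)[OF s(1) s1(1)] V1[OF s(1)] by (simp only:)
    have w2: "W2 (complex_of_real s) = complex_of_real (m (- (s *\<^sub>R d)))"
      using e2(3)[OF s(1) s1(2)] V2[OF s(1)] by (simp only:)
    have Fs: "F (complex_of_real s) = complex_of_real (m (s *\<^sub>R d) + m (- (s *\<^sub>R d)))"
      unfolding F_def w1 w2 of_real_add ..
    have "s * norm d \<le> s * (norm d + 1)" using s by simp
    also have "s * (norm d + 1) \<le> 1/2"
    proof -
      have X: "0 < 2 * (norm d + 1)" using nd by simp
      have "s * (2 * (norm d + 1)) < 1" using s1(3) X by (simp add: less_divide_eq)
      moreover have "s * (2 * (norm d + 1)) = 2 * (s * (norm d + 1))" by simp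
      ultimately show ?thesis by linarith
    qed
    finally have nv: "norm (s *\<^sub>R d) \<le> 1/2" using s by simp
    have ce: "\<bar>m (s *\<^sub>R d) + m (- (s *\<^sub>R d)) - 2 * m 0\<bar> \<le> 2 * (real k * K0) * norm (s *\<^sub>R d) ^ 2"
      using cone_estimate[OF nz nv] unfolding m_def C_def K0_def .
    have "norm (F (complex_of_real s) - complex_of_real (2 * m 0)) = \<bar>m (s *\<^sub>R d) + m (- (s *\<^sub>R d)) - 2 * m 0\<bar>"
      unfolding Fs of_real_diff[symmetric] norm_of_real by simp
    also have "\<dots> \<le> K * s^2" using ce s by (simp add: K_def power_mult_distrib mult_ac)
    finally show "norm (F (complex_of_real s) - complex_of_real (2 * m 0)) \<le> K * s^2" .
  qed
  moreover have "deriv F 0 = deriv W1 0 + deriv W2 0"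
    unfolding F_def by (rule deriv_add[OF d1 d2])
  ultimately show ?thesis by simp
qed

end
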